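(* Let $G$ be a tree and let $v\in V(G)$ be a vertex with $N_G(v)=\{v_1,\dots,v_r\}$, where $r\geq 2$ and $\deg_G(v_i)=1$ for all $i<r$. Let $e=\{v,v_r\}$. Then $$\nu_3(G\setminus N_G[e])\leq \nu_3(G)-1.$$
   Context: All graphs are finite and simple; a tree is a graph containing no cycle. $N_G(z)$ is the set of neighbors of $z$; for an edge $e=\{x,y\}$, $N_G[e]=N_G(x)\cup N_G(y)\cup\{x,y\}$, and $G\setminus N_G[e]$ is the induced subgraph of $G$ on $V(G)\setminus N_G[e]$. A $3$-path in $G$ is a sequence of three distinct vertices $a,b,c$ with $\{a,b\},\{b,c\}\in E(G)$. A $3$-path induced matching of $G$ is a collection of pairwise vertex-disjoint $3$-paths whose union is an induced subgraph of $G$ (the induced subgraph on the union of their vertices has no edges other than the path edges). $\nu_3(G)$ is the largest number of paths in a $3$-path induced matching of $G$. *)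

theory Defs
  imports Main
begin

definition simple_graph :: "'a set \<Rightarrow> 'a set set \<Rightarrow> bool" where
  "simple_graph V E \<longleftrightarrow> finite V \<and> (\<forall>e\<in>E. \<exists>x y. x \<noteq> y \<and> e = {x, y} \<and> x \<in> V \<and> y \<in> V)"

definition neighbors :: "'a set set \<Rightarrow> 'a \<Rightarrow> 'a set" where
  "neighbors E z = {u. {z, u} \<in> E}"

definition degree :: "'a set set \<Rightarrow> 'a \<Rightarrow> nat" where
  "degree E z = card (neighbors E z)"

definition closed_nbhd_edge :: "'a set set \<Rightarrow> 'a \<Rightarrow> 'a \<Rightarrow> 'a set" where
  "closed_nbhd_edge E x y = neighbors E x \<union> neighbors E y \<union> {x, y}"

definition induced_edges :: "'a set set \<Rightarrow> 'a set \<Rightarrow> 'a set set" where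
  "induced_edges E S = {e \<in> E. e \<subseteq> S}"

definition is_cycle :: "'a set \<Rightarrow> 'a set set \<Rightarrow> 'a list \<Rightarrow> bool" where
  "is_cycle V E cs \<longleftrightarrow> length cs \<ge> 3 \<and> distinct cs \<and> set cs \<subseteq> V \<and>
     (\<forall>i < length cs - 1. {cs ! i, cs ! Suc i} \<in> E) \<and> {last cs, hd cs} \<in> E"

definition is_tree :: "'a set \<Rightarrow> 'a set set \<Rightarrow> bool" where
  "is_tree V E \<longleftrightarrow> simple_graph V E \<and> (\<nexists>cs. is_cycle V E cs)"

definition path_verts :: "'a \<times> 'a \<times> 'a \<Rightarrow> 'a set" where
  "path_verts p = (case p of (a, b, c) \<Rightarrow> {a, b, c})"

definition path_edges :: "'a \<times> 'a \<times> 'a \<Rightarrow> 'a set set" where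
  "path_edges p = (case p of (a, b, c) \<Rightarrow> {{a, b}, {b, c}})"

definition is_3path :: "'a set \<Rightarrow> 'a set set \<Rightarrow> 'a \<times> 'a \<times> 'a \<Rightarrow> bool" where
  "is_3path V E p \<longleftrightarrow> (case p of (a, b, c) \<Rightarrow>
     a \<in> V \<and> b \<in> V \<and> c \<in> V \<and> a \<noteq> b \<and> b \<noteq> c \<and> a \<noteq> c \<and> {a, b} \<in> E \<and> {b, c} \<in> E)"

definition is_3path_induced_matching :: "'a set \<Rightarrow> 'a set set \<Rightarrow> ('a \<times> 'a \<times> 'a) set \<Rightarrow> bool" where
  "is_3path_induced_matching V E M \<longleftrightarrow>
     (\<forall>p\<in>M. is_3path V E p) \<and>
     (\<forall>p\<in>M. \<forall>q\<in>M. p \<noteq> q \<longrightarrow> path_verts p \<inter> path_verts q = {}) \<and>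
     induced_edges E (\<Union>p\<in>M. path_verts p) = (\<Union>p\<in>M. path_edges p)"

definition nu3 :: "'a set \<Rightarrow> 'a set set \<Rightarrow> nat" where
  "nu3 V E = Max {card M | M. finite M \<and> is_3path_induced_matching V E M}"

end

theory Submission
  imports Defs
begin

lemma matching_sub:
  assumes "is_3path_induced_matching V E M"
  shows "M \<subseteq> V \<times> V \<times> V"
  using assms unfolding is_3path_induced_matching_def is_3path_def by fastforce

lemma nu3_fin:
  assumes "finite V"
  shows "finite {card M |M. finite M \<and> is_3path_induced_matching V E M}"
proof -
  have "{card M |M. finite M \<and> is_3path_induced_matching V E M} \<subseteq> {..card (V \<times> V \<times> V)}"
  proof
    fix n assume "n \<in> {card M |M. finite M \<and> is_3path_induced_matching V E M}"
    then obtain M where "n = card M" "is_3path_induced_matching V E M" by auto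
    then show "n \<in> {..card (V \<times> V \<times> V)}"
      using matching_sub[of V E M] assms card_mono[of "V \<times> V \<times> V" M] by auto
  qed
  then show ?thesis using finite_subset by blast
qed

lemma nu3_ne: assumes "{} \<notin> E" shows "{card M |M. finite M \<and> is_3path_induced_matching V E M} \<noteq> {}"
proof -
  have "is_3path_induced_matching V E {}"
    using assms unfolding is_3path_induced_matching_def induced_edges_def by auto
  then show ?thesis by blast
qed

theorem lemma4p3:
  fixes V :: "'a set" and E :: "'a set set" and v vr :: 'a
  assumes "is_tree V E"
    and "v \<in> V"
    and "vr \<in> neighbors E v"
    and "card (neighbors E v) \<ge> 2"
    and "\<forall>u \<in> neighbors E v - {vr}. degree E u = 1"
  shows "nu3 (V - closed_nbhd_edge E v vr) (induced_edges E (V - closed_nbhd_edge E v vr)) + 1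
           \<le> nu3 V E"
proof -
  define W where "W = V - closed_nbhd_edge E v vr"
  define E' where "E' = induced_edges E W"
  have sg: "simple_graph V E" using assms(1) is_tree_def by auto
  have finV: "finite V" using sg simple_graph_def by auto
  have finW: "finite W" using finV W_def by auto
  have noloop: "\<And>x. {x} \<notin> E" using sg unfolding simple_graph_def
    by (metis doubleton_eq_iff insert_absorb2)
  have inV: "\<And>x y. {x,y} \<in> E \<Longrightarrow> x \<in> V \<and> y \<in> V" using sg unfolding simple_graph_def
    by (metis doubleton_eq_iff)
  have "neighbors E v - {vr} \<noteq> {}"
  proof
    assume "neighbors E v - {vr} = {}"
    then have "neighbors E v \<subseteq> {vr}" by auto
    then have "card (neighbors E v) \<le> card {vr}" by (intro card_mono) auto
    then have "card (neighbors E v) \<le> 1" by simp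
    then show False using assms(4) by auto
  qed
  then obtain u where u: "u \<in> neighbors E v" "u \<noteq> vr" by auto
  have uv: "{v,u} \<in> E" using u neighbors_def by fastforce
  have vvr: "{v,vr} \<in> E" using assms(3) neighbors_def by fastforce
  have "v \<noteq> u" using uv noloop by auto
  have "v \<noteq> vr" using vvr noloop by auto
  have "degree E u = 1" using assms(5) u by blast
  then have du: "card (neighbors E u) = 1" unfolding degree_def .
  have noempty: "{} \<notin> E'" using sg unfolding simple_graph_def E'_def induced_edges_def by blast
  have "v \<in> neighbors E u" using uv neighbors_def by (metis insert_commute mem_Collect_eq)
  then have Nu: "neighbors E u = {v}" using du
    by (metis card_1_singletonE singletonD)
  have Nu': "\<And>x. {u,x} \<in> E \<longleftrightarrow> x = v"
    using Nu unfolding neighbors_def by auto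
  obtain M where M: "finite M" "is_3path_induced_matching W E' M" "card M = nu3 W E'"
    using Max_in[OF nu3_fin[OF finW] nu3_ne[OF noempty]] unfolding nu3_def by auto
  define S where "S = (\<Union>p\<in>M. path_verts p)"
  have MV: "M \<subseteq> W \<times> W \<times> W" using matching_sub[OF M(2)] .
  have SW: "S \<subseteq> W" using MV unfolding S_def path_verts_def by auto
  have Sfacts: "\<And>x. x \<in> S \<Longrightarrow> x \<noteq> v \<and> x \<noteq> vr \<and> x \<noteq> u \<and> {v,x} \<notin> E \<and> {vr,x} \<notin> E"
  proof -
    fix x assume "x \<in> S"
    then have "x \<in> W" using SW by auto
    then show "x \<noteq> v \<and> x \<noteq> vr \<and> x \<noteq> u \<and> {v,x} \<notin> E \<and> {vr,x} \<notin> E"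
      unfolding W_def closed_nbhd_edge_def neighbors_def using uv by auto
  qed
  define p where "p = (u, v, vr)"
  have pnot: "p \<notin> M" using MV p_def Sfacts u(1) unfolding W_def closed_nbhd_edge_def by auto
  have M2: "induced_edges E' S = (\<Union>q\<in>M. path_edges q)" using M(2)
    unfolding is_3path_induced_matching_def S_def by auto
  have "is_3path_induced_matching V E (insert p M)"
    unfolding is_3path_induced_matching_def
  proof (intro conjI)
    show "\<forall>q\<in>insert p M. is_3path V E q"
    proof
      fix q assume "q \<in> insert p M"
      then show "is_3path V E q"
      proof
        assume "q = p"
        then show ?thesis unfolding p_def is_3path_def using uv vvr inV \<open>v \<noteq> u\<close> \<open>v \<noteq> vr\<close> u(2)
          by (auto simp: insert_commute)
      next
        assume "q \<in> M"
        then have "is_3path W E' q" using M(2) unfolding is_3path_induced_matching_def by blast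
        then show ?thesis unfolding is_3path_def E'_def W_def induced_edges_def by auto
      qed
    qed
  next
    show "\<forall>q\<in>insert p M. \<forall>q'\<in>insert p M. q \<noteq> q' \<longrightarrow> path_verts q \<inter> path_verts q' = {}"
    proof -
      have "\<And>q. q \<in> M \<Longrightarrow> path_verts q \<inter> path_verts p = {}"
        using Sfacts unfolding S_def p_def path_verts_def by fastforce
      then show ?thesis using M(2) unfolding is_3path_induced_matching_def by blast
    qed
  next
    have U1: "(\<Union>q\<in>insert p M. path_verts q) = S \<union> {u,v,vr}"
      unfolding S_def p_def path_verts_def by auto
    have U2: "(\<Union>q\<in>insert p M. path_edges q) = (\<Union>q\<in>M. path_edges q) \<union> {{u,v},{v,vr}}"
      unfolding p_def path_edges_def by auto
    have "induced_edges E (S \<union> {u,v,vr}) = induced_edges E' S \<union> {{u,v},{v,vr}}"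
    proof
      show "induced_edges E (S \<union> {u, v, vr}) \<subseteq> induced_edges E' S \<union> {{u, v}, {v, vr}}"
      proof
        fix e assume e: "e \<in> induced_edges E (S \<union> {u, v, vr})"
        then have eE: "e \<in> E" and es: "e \<subseteq> S \<union> {u,v,vr}" unfolding induced_edges_def by auto
        then obtain x y where xy: "x \<noteq> y" "e = {x,y}" using sg unfolding simple_graph_def by blast
        show "e \<in> induced_edges E' S \<union> {{u, v}, {v, vr}}"
        proof (cases "x \<in> S \<and> y \<in> S")
          case True
          then show ?thesis using eE xy SW unfolding E'_def induced_edges_def by auto
        next
          case False
          have c1: "\<And>a. a \<in> S \<Longrightarrow> {a,u} \<notin> E \<and> {a,v} \<notin> E \<and> {a,vr} \<notin> E
               \<and> {u,a} \<notin> E \<and> {v,a} \<notin> E \<and> {vr,a} \<notin> E"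
            using Sfacts Nu' by (metis insert_commute)
          have c2: "{u,vr} \<notin> E" "{vr,u} \<notin> E" using Nu'[of vr] \<open>v \<noteq> vr\<close> by (auto simp: insert_commute)
          have "x \<in> S \<union> {u,v,vr}" "y \<in> S \<union> {u,v,vr}" using es xy by auto
          then show ?thesis using False c1 c2 eE xy noloop Sfacts
            by auto
        qed
      qed
    next
      show "induced_edges E' S \<union> {{u, v}, {v, vr}} \<subseteq> induced_edges E (S \<union> {u, v, vr})"
        using uv vvr unfolding E'_def induced_edges_def by (auto simp: insert_commute)
    qed
    then show "induced_edges E (\<Union>q\<in>insert p M. path_verts q) = (\<Union>q\<in>insert p M. path_edges q)"
      using U1 U2 M2 by simp
  qed
  moreover have "finite (insert p M)" using M(1) by auto
  ultimately have "card (insert p M) \<le> nu3 V E"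
    unfolding nu3_def using Max_ge[OF nu3_fin[OF finV]] by blast
  then show ?thesis using M(1,3) pnot W_def E'_def by simp
qed

end
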